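(* The dominating cooperative game mapping $\omega$ is weakly chain-rule decomposable and importance inducing.
   Context: $X$ is a fixed finite set of $n=|X|$ variables. An assignment over $U\subseteq X$ is a map $\mathbf u:U\to\{0,1\}$; $\mathbf u;\mathbf v$ is concatenation of assignments with disjoint domains, $\mathbf u_S$ is restriction. For $S\subseteq X$ and $\mathbf u$ over $X$, $\mathbf u^{\oplus S}$ flips the values of the variables in $S$. $\mathbb B(X)$ is the set of Boolean functions $\{0,1\}^X\to\{0,1\}$, combined pointwise by $\lor,\land$ (juxtaposition), $\oplus$, negation $\overline f$; a variable $x$ also denotes $\mathbf u\mapsto\mathbf u(x)$; $f\ge g$ is pointwise. Cofactor: $f_{\mathbf v}(\mathbf u)=f(\mathbf v;\mathbf u_{X\setminus V})$ for $\mathbf v$ over $V$; $f_{x/c}$ for $V=\{x\}$. $\mathrm{dep}(f)=\{x: f_{x/1}\ne f_{x/0}\}$; $f$ is monotone in $x$ if $f_{x/1}\ge f_{x/0}$. $f^{\oplus y}(\mathbf u)=f(\mathbf u^{\oplus\{y\}})$. For a permutation $\sigma$ of $X$: $(\sigma\mathbf u)(x)=\mathbf u(\sigma^{-1}(x))$, $(\sigma f)(\mathbf u)=f(\sigma^{-1}\mathbf u)$. $f[x/s]=s f_{x/1}\lor\overline s f_{x/0}$. Modularity: $f$ is modular in $g$ if $g$ is not constant and there are $\ell\in\mathbb B(X)$, $z\in X$ with $\mathrm{dep}(\ell)\cap\mathrm{dep}(g)=\emptyset$ and $f=\ell[z/g]$; monotonically modular if moreover $\ell$ is monotone in $z$.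 Then $f_{g/1}:=\ell_{z/1}$, $f_{g/0}:=\ell_{z/0}$ (well defined), and for a variable $w$, $f[g/w]:=w f_{g/1}\lor\overline w f_{g/0}$. Cooperative games: $v:2^X\to\mathbb R$, combined and compared pointwise; $\partial_xv(S)=v(S\cup\{x\})-v(S\setminus\{x\})$. A cooperative game mapping (CGM) is $\tau:\mathbb B(X)\to(2^X\to\mathbb R)$, $f\mapsto\tau_f$. It is importance inducing if for all $x,y\in X$, permutations $\sigma$ and $f,g,h$: (Bound$_{CG}$) $0\le\partial_x\tau_f\le1$; (Dum$_{CG}$) $\partial_x\tau_f=0$ if $x\notin\mathrm{dep}(f)$; (Dic$_{CG}$) $\partial_x\tau_x=\partial_x\tau_{\overline x}=1$; (Type$_{CG}$) $\tau_f(S)=\tau_{\sigma f}(\sigma(S))$ and $\tau_f(S)=\tau_{f^{\oplus y}}(S)$ for all $S$; (ModEC$_{CG}$) $\partial_x\tau_f\ge\partial_x\tau_h$ whenever $f,h$ are monotonically modular in $g$, $f_{g/1}\ge h_{g/1}$, $h_{g/0}\ge f_{g/0}$, $x\in\mathrm{dep}(g)$. $\tau$ is weakly chain-rule decomposable if for all $f$ monotonically modular in $g$ and $x\in\mathrm{dep}(g)$: $\partial_x\tau_f=(\partial_x\tau_g)(\partial_{x_g}\tau_{f[g/x_g]})$ for a variable $x_g\notin\mathrm{dep}(f)$. The dominating CGM is $\omega_f(S)=1$ if there is $\mathbf u\in\{0,1\}^S$ such that $f(\mathbf u;\mathbf w)=1$ for all $\mathbf w\in\{0,1\}^{X\setminus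 S}$, and $\omega_f(S)=0$ otherwise. *)

theory Defs
  imports Complex_Main
begin

text \<open>Variables: elements of a finite type 'x (the set X = UNIV).
  A function on a sub-domain X - V (e.g. a cofactor) is represented as a total
  Boolean function that ignores the variables in V.\<close>

type_synonym 'x bfun = "('x \<Rightarrow> bool) \<Rightarrow> bool"
type_synonym 'x game = "'x set \<Rightarrow> real"
type_synonym 'x cgm = "'x bfun \<Rightarrow> 'x game"

definition bvar :: "'x \<Rightarrow> 'x bfun" where
  "bvar x = (\<lambda>u. u x)"

definition cof :: "'x bfun \<Rightarrow> 'x \<Rightarrow> bool \<Rightarrow> 'x bfun" where
  "cof f x c = (\<lambda>u. f (u(x := c)))"

definition dep :: "'x bfun \<Rightarrow> 'x set" where
  "dep f = {x. cof f x True \<noteq> cof f x False}"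

definition monotone_in :: "'x bfun \<Rightarrow> 'x \<Rightarrow> bool" where
  "monotone_in f x \<longleftrightarrow> cof f x True \<ge> cof f x False"

definition flipvar :: "'x bfun \<Rightarrow> 'x \<Rightarrow> 'x bfun" where
  "flipvar f y = (\<lambda>u. f (u(y := \<not> u y)))"

text \<open>(\<sigma> u)(x) = u(\<sigma>^-1 x), (\<sigma> f)(u) = f(\<sigma>^-1 u); note (\<sigma>^-1 u) = u \<circ> \<sigma>.\<close>
definition perm_fun :: "('x \<Rightarrow> 'x) \<Rightarrow> 'x bfun \<Rightarrow> 'x bfun" where
  "perm_fun \<sigma> f = (\<lambda>u. f (u \<circ> \<sigma>))"

definition subst :: "'x bfun \<Rightarrow> 'x \<Rightarrow> 'x bfun \<Rightarrow> 'x bfun" where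
  "subst f x s = (\<lambda>u. (s u \<and> cof f x True u) \<or> (\<not> s u \<and> cof f x False u))"

definition nonconstant :: "'x bfun \<Rightarrow> bool" where
  "nonconstant g \<longleftrightarrow> (\<exists>u v. g u \<noteq> g v)"

definition modular :: "'x bfun \<Rightarrow> 'x bfun \<Rightarrow> bool" where
  "modular f g \<longleftrightarrow> nonconstant g \<and>
     (\<exists>l z. dep l \<inter> dep g = {} \<and> f = subst l z g)"

definition mono_modular :: "'x bfun \<Rightarrow> 'x bfun \<Rightarrow> bool" where
  "mono_modular f g \<longleftrightarrow> nonconstant g \<and>
     (\<exists>l z. dep l \<inter> dep g = {} \<and> monotone_in l z \<and> f = subst l z g)"

text \<open>f_{g/c} := l_{z/c} (well defined when f is modular in g).\<close>
definition mod_cof :: "'x bfun \<Rightarrow> 'x bfun \<Rightarrow> bool \<Rightarrow> 'x bfun" where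
  "mod_cof f g c = (SOME h. \<exists>l z. dep l \<inter> dep g = {} \<and> f = subst l z g \<and> h = cof l z c)"

definition mod_subst :: "'x bfun \<Rightarrow> 'x bfun \<Rightarrow> 'x \<Rightarrow> 'x bfun" where
  "mod_subst f g w = (\<lambda>u. (u w \<and> mod_cof f g True u) \<or> (\<not> u w \<and> mod_cof f g False u))"

definition pderiv_game :: "'x \<Rightarrow> 'x game \<Rightarrow> 'x game" where
  "pderiv_game x v = (\<lambda>S. v (S \<union> {x}) - v (S - {x}))"

definition importance_inducing :: "'x cgm \<Rightarrow> bool" where
  "importance_inducing \<tau> \<longleftrightarrow>
     (\<forall>f x S. 0 \<le> pderiv_game x (\<tau> f) S \<and> pderiv_game x (\<tau> f) S \<le> 1)
   \<and> (\<forall>f x. x \<notin> dep f \<longrightarrow> pderiv_game x (\<tau> f) = (\<lambda>S. 0))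
   \<and> (\<forall>x. pderiv_game x (\<tau> (bvar x)) = (\<lambda>S. 1)
          \<and> pderiv_game x (\<tau> (\<lambda>u. \<not> bvar x u)) = (\<lambda>S. 1))
   \<and> (\<forall>\<sigma> f S. bij \<sigma> \<longrightarrow> \<tau> f S = \<tau> (perm_fun \<sigma> f) (\<sigma> ` S))
   \<and> (\<forall>f y S. \<tau> f S = \<tau> (flipvar f y) S)
   \<and> (\<forall>f g h x. mono_modular f g \<and> mono_modular h g
          \<and> mod_cof f g True \<ge> mod_cof h g True
          \<and> mod_cof h g False \<ge> mod_cof f g False
          \<and> x \<in> dep g
          \<longrightarrow> pderiv_game x (\<tau> f) \<ge> pderiv_game x (\<tau> h))"

definition weakly_chain_rule_decomposable :: "'x cgm \<Rightarrow> bool" where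
  "weakly_chain_rule_decomposable \<tau> \<longleftrightarrow>
     (\<forall>f g x xg. mono_modular f g \<and> x \<in> dep g \<and> xg \<notin> dep f \<longrightarrow>
        pderiv_game x (\<tau> f) =
          (\<lambda>S. pderiv_game x (\<tau> g) S * pderiv_game xg (\<tau> (mod_subst f g xg)) S))"

definition dominating :: "'x cgm" where
  "dominating f S = (if \<exists>u. \<forall>w. f (\<lambda>x. if x \<in> S then u x else w x) then 1 else 0)"

end

theory Submission
  imports Defs
begin

definition D :: "'x bfun \<Rightarrow> 'x set \<Rightarrow> bool" where
  "D f S \<longleftrightarrow> (\<exists>u. \<forall>w. f (\<lambda>x. if x \<in> S then u x else w x))"

lemma dominating_D: "dominating f S = (if D f S then 1 else 0)"
  by (simp add: dominating_def D_def)

lemma D_mono_set: assumes "S \<subseteq> T" "D f S" shows "D f T"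
proof -
  from assms(2) obtain u where u: "\<forall>w. f (\<lambda>x. if x \<in> S then u x else w x)" by (auto simp: D_def)
  show ?thesis unfolding D_def
  proof (rule exI[of _ u], rule allI)
    fix w
    have "f (\<lambda>x. if x \<in> S then u x else (\<lambda>x. if x \<in> T then u x else w x) x)" by (rule spec[OF u])
    moreover have "(\<lambda>x. if x \<in> S then u x else (\<lambda>x. if x \<in> T then u x else w x) x) = (\<lambda>x. if x \<in> T then u x else w x)"
      using assms(1) by auto
    ultimately show "f (\<lambda>x. if x \<in> T then u x else w x)" by simp
  qed
qed

lemma D_mono_fun: assumes "\<And>u. f u \<Longrightarrow> h u" "D f S" shows "D h S"
  using assms unfolding D_def by blast

lemma indep_of_dep: assumes "x \<notin> dep f" shows "f (u(x := c)) = f u"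
proof -
  have "cof f x True = cof f x False" using assms by (simp add: dep_def)
  hence e: "f (u(x:=True)) = f (u(x:=False))" by (metis cof_def)
  have "f u = f (u(x := u x))" by simp
  then show ?thesis using e by (cases c; cases "u x") auto
qed

lemma dep_of_indep: assumes "\<And>u c. f (u(x := c)) = f u" shows "x \<notin> dep f"
  using assms by (simp add: dep_def cof_def)

lemma D_insert_remove: assumes "x \<notin> dep f" "D f (insert x S)" shows "D f (S - {x})"
proof -
  from assms(2) obtain u where u: "\<forall>w. f (\<lambda>y. if y \<in> insert x S then u y else w y)" by (auto simp: D_def)
  show ?thesis unfolding D_def
  proof (rule exI[of _ u], rule allI)
    fix w
    have "f ((\<lambda>y. if y \<in> S - {x} then u y else w y)(x := u x)) = f (\<lambda>y. if y \<in> S - {x} then u y else w y)"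
      by (rule indep_of_dep[OF assms(1)])
    moreover have "(\<lambda>y. if y \<in> S - {x} then u y else w y)(x := u x) = (\<lambda>y. if y \<in> insert x S then u y else w y)"
      by (auto simp: fun_eq_iff)
    ultimately show "f (\<lambda>y. if y \<in> S - {x} then u y else w y)" using u by metis
  qed
qed

lemma D_indep: assumes "x \<notin> dep f" shows "D f (insert x S) = D f S" and "D f (S - {x}) = D f S"
proof -
  show "D f (insert x S) = D f S"
  proof (cases "x \<in> S")
    case True then show ?thesis by (simp add: insert_absorb)
  next
    case False
    then show ?thesis using D_insert_remove[OF assms, of S] D_mono_set[of S "insert x S" f] by auto
  qed
  show "D f (S - {x}) = D f S"
  proof (cases "x \<in> S")
    case True
    then show ?thesis using D_insert_remove[OF assms, of S] D_mono_set[of "S - {x}" S f]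
      by (auto simp: insert_absorb)
  next
    case False then show ?thesis by simp
  qed
qed

lemma local_dep:
  fixes f :: "('x::finite) bfun"
  assumes "\<forall>y\<in>dep f. u y = v y" shows "f u = f v"
proof -
  have main: "\<forall>u. {y. u y \<noteq> v y} = F \<longrightarrow> (\<forall>y\<in>dep f. u y = v y) \<longrightarrow> f u = f v" if "finite F" for F
    using that
  proof (induction F rule: finite_induct)
    case empty
    show ?case
    proof (intro allI impI)
      fix u assume "{y. u y \<noteq> v y} = {}"
      then have "u = v" by (intro ext) blast
      then show "f u = f v" by simp
    qed
  next
    case (insert y F)
    show ?case
    proof (intro allI impI)
      fix u assume h1: "{y'. u y' \<noteq> v y'} = insert y F" and h2: "\<forall>y\<in>dep f. u y = v y"
      have "u y \<noteq> v y" using h1 by blast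
      hence "y \<notin> dep f" using h2 by blast
      hence a: "f (u(y := v y)) = f u" by (rule indep_of_dep)
      have b: "{y'. (u(y := v y)) y' \<noteq> v y'} = F"
      proof -
        have "{y'. (u(y := v y)) y' \<noteq> v y'} = {y'. u y' \<noteq> v y'} - {y}" by auto
        then show ?thesis using h1 insert.hyps(2) by simp
      qed
      have c: "\<forall>y'\<in>dep f. (u(y := v y)) y' = v y'" using h2 by simp
      have "f (u(y := v y)) = f v" using insert.IH b c by blast
      then show "f u = f v" using a by simp
    qed
  qed
  have "finite {y. u y \<noteq> v y}" by simp
  then show ?thesis using main assms by blast
qed

lemma core:
  assumes gl: "\<And>u u'. (\<And>y. y \<in> G \<Longrightarrow> u y = u' y) \<Longrightarrow> g u = g u'"
  and Al: "\<And>u u'. (\<And>y. y \<notin> G \<Longrightarrow> u y = u' y) \<Longrightarrow> A u = A u'"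
  and Bl: "\<And>u u'. (\<And>y. y \<notin> G \<Longrightarrow> u y = u' y) \<Longrightarrow> B u = B u'"
  and BA: "\<And>u. B u \<Longrightarrow> A u"
  shows "D (\<lambda>u. g u \<and> A u \<or> \<not> g u \<and> B u) S \<longleftrightarrow> (D g S \<and> D A S \<or> D B S)"
proof
  assume "D (\<lambda>u. g u \<and> A u \<or> \<not> g u \<and> B u) S"
  then obtain u where u: "\<And>w. g (\<lambda>x. if x \<in> S then u x else w x) \<and> A (\<lambda>x. if x \<in> S then u x else w x)
     \<or> \<not> g (\<lambda>x. if x \<in> S then u x else w x) \<and> B (\<lambda>x. if x \<in> S then u x else w x)"
    by (auto simp: D_def)
  have dA: "D A S" unfolding D_def using u BA by blast
  show "D g S \<and> D A S \<or> D B S"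
  proof (cases "D B S")
    case True then show ?thesis by simp
  next
    case False
    have "D g S" unfolding D_def
    proof (rule exI[of _ u], rule allI, rule ccontr)
      fix w0 assume ng: "\<not> g (\<lambda>x. if x \<in> S then u x else w0 x)"
      from False obtain w1 where nb: "\<not> B (\<lambda>x. if x \<in> S then u x else w1 x)"
        unfolding D_def by blast
      let ?w = "\<lambda>y. if y \<in> G then w0 y else w1 y"
      have "g (\<lambda>x. if x \<in> S then u x else ?w x) = g (\<lambda>x. if x \<in> S then u x else w0 x)"
        by (rule gl) auto
      moreover have "B (\<lambda>x. if x \<in> S then u x else ?w x) = B (\<lambda>x. if x \<in> S then u x else w1 x)"
        by (rule Bl) auto
      ultimately show False using u[of ?w] ng nb by simp
    qed
    then show ?thesis using dA by simp
  qed
next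
  assume "D g S \<and> D A S \<or> D B S"
  then show "D (\<lambda>u. g u \<and> A u \<or> \<not> g u \<and> B u) S"
  proof (elim disjE conjE)
    assume "D B S" then show ?thesis by (rule D_mono_fun[rotated]) (use BA in blast)
  next
    assume "D g S" "D A S"
    then obtain u1 u2 where u1: "\<And>w. g (\<lambda>x. if x \<in> S then u1 x else w x)"
      and u2: "\<And>w. A (\<lambda>x. if x \<in> S then u2 x else w x)" by (auto simp: D_def)
    let ?u = "\<lambda>y. if y \<in> G then u1 y else u2 y"
    show ?thesis unfolding D_def
    proof (rule exI[of _ ?u], rule allI)
      fix w
      have "g (\<lambda>x. if x \<in> S then ?u x else w x) = g (\<lambda>x. if x \<in> S then u1 x else w x)"
        by (rule gl) auto
      moreover have "A (\<lambda>x. if x \<in> S then ?u x else w x) = A (\<lambda>x. if x \<in> S then u2 x else w x)"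
        by (rule Al) auto
      ultimately show "g (\<lambda>x. if x \<in> S then ?u x else w x) \<and> A (\<lambda>x. if x \<in> S then ?u x else w x) \<or>
        \<not> g (\<lambda>x. if x \<in> S then ?u x else w x) \<and> B (\<lambda>x. if x \<in> S then ?u x else w x)"
        using u1[of w] u2[of w] by simp
    qed
  qed
qed

lemma D_bvar: "D (bvar x) S \<longleftrightarrow> x \<in> S"
proof
  assume "D (bvar x) S"
  then obtain u where "\<forall>w. bvar x (\<lambda>y. if y \<in> S then u y else w y)" by (auto simp: D_def)
  then have "bvar x (\<lambda>y. if y \<in> S then u y else False)" by (rule spec)
  then show "x \<in> S" by (auto simp: bvar_def split: if_splits)
next
  assume "x \<in> S" then show "D (bvar x) S" unfolding D_def bvar_def by (intro exI[of _ "\<lambda>_. True"]) auto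
qed

lemma D_nbvar: "D (\<lambda>u. \<not> bvar x u) S \<longleftrightarrow> x \<in> S"
proof
  assume "D (\<lambda>u. \<not> bvar x u) S"
  then obtain u where "\<forall>w. \<not> bvar x (\<lambda>y. if y \<in> S then u y else w y)" by (auto simp: D_def)
  then have "\<not> bvar x (\<lambda>y. if y \<in> S then u y else True)" by (rule spec)
  then show "x \<in> S" by (auto simp: bvar_def split: if_splits)
next
  assume "x \<in> S" then show "D (\<lambda>u. \<not> bvar x u) S" unfolding D_def bvar_def by (intro exI[of _ "\<lambda>_. False"]) auto
qed

lemma D_perm: assumes "bij \<sigma>" shows "D f S = D (perm_fun \<sigma> f) (\<sigma> ` S)"
proof -
  have inj: "inj \<sigma>" using assms bij_is_inj by blast
  have eq: "(\<lambda>x. if x \<in> \<sigma> ` S then u x else w x) \<circ> \<sigma> = (\<lambda>y. if y \<in> S then (u \<circ> \<sigma>) y else (w \<circ> \<sigma>) y)" for u w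
    using inj by (auto simp: fun_eq_iff inj_image_mem_iff)
  have inv: "(u \<circ> inv \<sigma>) \<circ> \<sigma> = u" for u :: "'a \<Rightarrow> bool"
    using inj by (auto simp: fun_eq_iff inv_f_f)
  have "D (perm_fun \<sigma> f) (\<sigma> ` S) \<longleftrightarrow> (\<exists>u. \<forall>w. f (\<lambda>y. if y \<in> S then (u \<circ> \<sigma>) y else (w \<circ> \<sigma>) y))"
    unfolding D_def perm_fun_def eq ..
  also have "\<dots> \<longleftrightarrow> D f S"
  proof
    assume "\<exists>u. \<forall>w. f (\<lambda>y. if y \<in> S then (u \<circ> \<sigma>) y else (w \<circ> \<sigma>) y)"
    then obtain u where u: "\<And>w. f (\<lambda>y. if y \<in> S then (u \<circ> \<sigma>) y else (w \<circ> \<sigma>) y)" by blast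
    show "D f S" unfolding D_def
    proof (rule exI[of _ "u \<circ> \<sigma>"], rule allI)
      fix w0 show "f (\<lambda>x. if x \<in> S then (u \<circ> \<sigma>) x else w0 x)" using u[of "w0 \<circ> inv \<sigma>"] by (simp only: inv)
    qed
  next
    assume "D f S"
    then obtain u0 where u0: "\<And>w. f (\<lambda>y. if y \<in> S then u0 y else w y)" by (auto simp: D_def)
    show "\<exists>u. \<forall>w. f (\<lambda>y. if y \<in> S then (u \<circ> \<sigma>) y else (w \<circ> \<sigma>) y)"
      unfolding inv by (rule exI[of _ "u0 \<circ> inv \<sigma>"], rule allI, unfold inv, rule u0)
  qed
  finally show ?thesis by simp
qed

lemma D_flip: "D f S = D (flipvar f y) S"
proof -
  let ?p = "\<lambda>u::'a \<Rightarrow> bool. u(y := \<not> u y)"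
  have eq: "?p (\<lambda>x. if x \<in> S then u x else w x) = (\<lambda>x. if x \<in> S then ?p u x else ?p w x)" for u w
    by (auto simp: fun_eq_iff)
  have pp: "?p (?p u) = u" for u by (auto simp: fun_eq_iff)
  have "D (flipvar f y) S \<longleftrightarrow> (\<exists>u. \<forall>w. f (\<lambda>x. if x \<in> S then ?p u x else ?p w x))"
    unfolding D_def flipvar_def eq ..
  also have "\<dots> \<longleftrightarrow> D f S"
  proof
    assume "\<exists>u. \<forall>w. f (\<lambda>x. if x \<in> S then ?p u x else ?p w x)"
    then obtain u where u: "\<And>w. f (\<lambda>x. if x \<in> S then ?p u x else ?p w x)" by blast
    show "D f S" unfolding D_def
    proof (rule exI[of _ "?p u"], rule allI)
      fix w0 show "f (\<lambda>x. if x \<in> S then ?p u x else w0 x)" using u[of "?p w0"] by (simp only: pp)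
    qed
  next
    assume "D f S"
    then obtain u0 where u0: "\<And>w. f (\<lambda>x. if x \<in> S then u0 x else w x)" by (auto simp: D_def)
    show "\<exists>u. \<forall>w. f (\<lambda>x. if x \<in> S then ?p u x else ?p w x)"
      by (rule exI[of _ "?p u0"]) (simp only: pp u0 simp_thms)
  qed
  finally show ?thesis by simp
qed

lemma key:
  fixes l g :: "('x::finite) bfun"
  assumes dis: "dep l \<inter> dep g = {}" and fs: "f = subst l z g" and gv: "g v = c"
  shows "cof l z c u = f (\<lambda>y. if y \<in> dep g then v y else u y)"
proof -
  let ?u' = "\<lambda>y. if y \<in> dep g then v y else u y"
  have "g ?u' = g v" by (rule local_dep[of g]) simp
  hence g': "g ?u' = c" using gv by simp
  have "f ?u' = cof l z c ?u'" using g' by (cases c) (simp_all add: fs subst_def)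
  also have "cof l z c ?u' = cof l z c u" unfolding cof_def
  proof (rule local_dep[of l], rule ballI)
    fix y assume "y \<in> dep l"
    then have "y \<notin> dep g" using dis by blast
    then show "(?u'(z := c)) y = (u(z := c)) y" by simp
  qed
  finally show ?thesis by simp
qed

lemma mod_cof_repr:
  fixes f g :: "('x::finite) bfun"
  assumes ex: "\<exists>l z. dep l \<inter> dep g = {} \<and> f = subst l z g" and gv: "g v = c"
  shows "mod_cof f g c = (\<lambda>u. f (\<lambda>y. if y \<in> dep g then v y else u y))"
proof -
  let ?P = "\<lambda>h. \<exists>l z. dep l \<inter> dep g = {} \<and> f = subst l z g \<and> h = cof l z c"
  have "\<exists>h. ?P h" using ex by blast
  hence "?P (SOME h. ?P h)" by (rule someI_ex)
  then obtain l z where l1: "dep l \<inter> dep g = {}" and l2: "f = subst l z g"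
    and l3: "(SOME h. ?P h) = cof l z c" by blast
  have "cof l z c = (\<lambda>u. f (\<lambda>y. if y \<in> dep g then v y else u y))"
    by (rule ext) (rule key[OF l1 l2 gv])
  then show ?thesis using l3 unfolding mod_cof_def by simp
qed

lemma mm_struct:
  fixes f g :: "('x::finite) bfun"
  assumes mm: "mono_modular f g"
  shows "f = (\<lambda>u. g u \<and> mod_cof f g True u \<or> \<not> g u \<and> mod_cof f g False u)"
    and "\<And>u. mod_cof f g False u \<Longrightarrow> mod_cof f g True u"
    and "\<And>u u'. (\<And>y. y \<notin> dep g \<Longrightarrow> u y = u' y) \<Longrightarrow> mod_cof f g c u = mod_cof f g c u'"
    and "\<And>xg u b. xg \<notin> dep f \<Longrightarrow> mod_cof f g c (u(xg := b)) = mod_cof f g c u"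
proof -
  obtain l z where l1: "dep l \<inter> dep g = {}" and l2: "monotone_in l z" and l3: "f = subst l z g"
    and nc: "nonconstant g" using mm unfolding mono_modular_def by blast
  have ex: "\<exists>l z. dep l \<inter> dep g = {} \<and> f = subst l z g" using l1 l3 by blast
  have hv: "\<exists>v. g v = c" for c
  proof -
    obtain a b where "g a \<noteq> g b" using nc unfolding nonconstant_def by blast
    then show ?thesis by (cases c; cases "g a") auto
  qed
  have mc: "mod_cof f g c = cof l z c" for c
  proof -
    obtain v where gv: "g v = c" using hv by blast
    show ?thesis unfolding mod_cof_repr[OF ex gv] by (rule ext) (rule key[OF l1 l3 gv, symmetric])
  qed
  show "f = (\<lambda>u. g u \<and> mod_cof f g True u \<or> \<not> g u \<and> mod_cof f g False u)"
    unfolding mc using l3 by (simp add: subst_def)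
  show "\<And>u. mod_cof f g False u \<Longrightarrow> mod_cof f g True u"
    unfolding mc using l2 by (auto simp: monotone_in_def le_fun_def)
  obtain v where gv: "g v = c" using hv by blast
  show "mod_cof f g c u = mod_cof f g c u'" if h: "\<And>y. y \<notin> dep g \<Longrightarrow> u y = u' y" for u u'
  proof -
    have "(\<lambda>y. if y \<in> dep g then v y else u y) = (\<lambda>y. if y \<in> dep g then v y else u' y)"
      using h by (auto simp: fun_eq_iff)
    then show ?thesis unfolding mod_cof_repr[OF ex gv] by simp
  qed
  show "mod_cof f g c (u(xg := b)) = mod_cof f g c u" if h: "xg \<notin> dep f" for xg u b
  proof (cases "xg \<in> dep g")
    case True
    have "(\<lambda>y. if y \<in> dep g then v y else (u(xg := b)) y) = (\<lambda>y. if y \<in> dep g then v y else u y)"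
      using True by (auto simp: fun_eq_iff)
    then show ?thesis unfolding mod_cof_repr[OF ex gv] by simp
  next
    case False
    have "(\<lambda>y. if y \<in> dep g then v y else (u(xg := b)) y) = (\<lambda>y. if y \<in> dep g then v y else u y)(xg := b)"
      using False by (auto simp: fun_eq_iff)
    then show ?thesis unfolding mod_cof_repr[OF ex gv] using indep_of_dep[OF h] by simp
  qed
qed

lemma deriv_decomp:
  fixes f g :: "('x::finite) bfun"
  assumes mm: "mono_modular f g" and x: "x \<in> dep g"
  shows "pderiv_game x (dominating f) S = pderiv_game x (dominating g) S *
     (if D (mod_cof f g True) S \<and> \<not> D (mod_cof f g False) S then 1 else 0)"
proof -
  define A where "A = mod_cof f g True"
  define B where "B = mod_cof f g False"
  define h where "h = (\<lambda>u. g u \<and> A u \<or> \<not> g u \<and> B u)"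
  have fh: "f = h" unfolding h_def A_def B_def by (rule mm_struct(1)[OF mm])
  have cf: "D f T \<longleftrightarrow> (D g T \<and> D A T \<or> D B T)" for T
  proof -
    have "D f T = D h T" using fh by simp
    also have "\<dots> \<longleftrightarrow> (D g T \<and> D A T \<or> D B T)" unfolding h_def
    proof (rule core[where G="dep g"])
      show "g u = g u'" if "\<And>y. y \<in> dep g \<Longrightarrow> u y = u' y" for u u'
        by (rule local_dep[of g]) (use that in auto)
      show "A u = A u'" if "\<And>y. y \<notin> dep g \<Longrightarrow> u y = u' y" for u u'
        unfolding A_def by (rule mm_struct(3)[OF mm]) (use that in auto)
      show "B u = B u'" if "\<And>y. y \<notin> dep g \<Longrightarrow> u y = u' y" for u u'
        unfolding B_def by (rule mm_struct(3)[OF mm]) (use that in auto)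
      show "A u" if "B u" for u using that unfolding A_def B_def by (rule mm_struct(2)[OF mm])
    qed
    finally show ?thesis .
  qed
  have xA: "x \<notin> dep A"
  proof (rule dep_of_indep)
    fix u c show "A (u(x := c)) = A u"
      unfolding A_def by (rule mm_struct(3)[OF mm]) (use x in auto)
  qed
  have xB: "x \<notin> dep B"
  proof (rule dep_of_indep)
    fix u c show "B (u(x := c)) = B u"
      unfolding B_def by (rule mm_struct(3)[OF mm]) (use x in auto)
  qed
  have g01: "D g (S - {x}) \<Longrightarrow> D g (insert x S)" by (erule D_mono_set[rotated]) blast
  have BA: "D B S \<Longrightarrow> D A S"
    unfolding A_def B_def by (erule D_mono_fun[rotated]) (rule mm_struct(2)[OF mm])
  show ?thesis
    unfolding pderiv_game_def dominating_D Un_insert_right Un_empty_right cf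
      D_indep[OF xA] D_indep[OF xB] A_def[symmetric] B_def[symmetric]
    using g01 BA by (cases "D g (insert x S)"; cases "D g (S - {x})"; cases "D A S"; cases "D B S") simp_all
qed

lemma deriv_subst:
  fixes f g :: "('x::finite) bfun"
  assumes mm: "mono_modular f g" and xg: "xg \<notin> dep f"
  shows "pderiv_game xg (dominating (mod_subst f g xg)) S =
     (if D (mod_cof f g True) S \<and> \<not> D (mod_cof f g False) S then 1 else 0)"
proof -
  define A where "A = mod_cof f g True"
  define B where "B = mod_cof f g False"
  have Aind: "A (u(xg := b)) = A u" for u b unfolding A_def by (rule mm_struct(4)[OF mm xg])
  have Bind: "B (u(xg := b)) = B u" for u b unfolding B_def by (rule mm_struct(4)[OF mm xg])
  have ms: "mod_subst f g xg = (\<lambda>u. bvar xg u \<and> A u \<or> \<not> bvar xg u \<and> B u)"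
    unfolding mod_subst_def A_def B_def bvar_def ..
  have cf: "D (mod_subst f g xg) T \<longleftrightarrow> (xg \<in> T \<and> D A T \<or> D B T)" for T
    unfolding ms D_bvar[symmetric]
  proof (rule core[where G="{xg}"])
    show "bvar xg u = bvar xg u'" if "\<And>y. y \<in> {xg} \<Longrightarrow> u y = u' y" for u u'
      using that by (simp add: bvar_def)
    show "A u = A u'" if h: "\<And>y. y \<notin> {xg} \<Longrightarrow> u y = u' y" for u u'
    proof -
      have "u' = u(xg := u' xg)" using h by (auto simp: fun_eq_iff)
      then show ?thesis using Aind by metis
    qed
    show "B u = B u'" if h: "\<And>y. y \<notin> {xg} \<Longrightarrow> u y = u' y" for u u'
    proof -
      have "u' = u(xg := u' xg)" using h by (auto simp: fun_eq_iff)
      then show ?thesis using Bind by metis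
    qed
    show "A u" if "B u" for u using that unfolding A_def B_def by (rule mm_struct(2)[OF mm])
  qed
  have xA: "xg \<notin> dep A" by (rule dep_of_indep) (rule Aind)
  have xB: "xg \<notin> dep B" by (rule dep_of_indep) (rule Bind)
  have BA: "D B S \<Longrightarrow> D A S"
    unfolding A_def B_def by (erule D_mono_fun[rotated]) (rule mm_struct(2)[OF mm])
  show ?thesis
    unfolding pderiv_game_def dominating_D Un_insert_right Un_empty_right cf
      D_indep[OF xA] D_indep[OF xB] A_def[symmetric] B_def[symmetric]
    using BA by (cases "D A S"; cases "D B S") simp_all
qed

lemma pderiv_bounds: "0 \<le> pderiv_game x (dominating f) S \<and> pderiv_game x (dominating f) S \<le> 1"
proof -
  have "D f (S - {x}) \<Longrightarrow> D f (S \<union> {x})" by (erule D_mono_set[rotated]) blast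
  then show ?thesis unfolding pderiv_game_def dominating_D
    by (cases "D f (S - {x})"; cases "D f (S \<union> {x})") simp_all
qed

theorem mainTheorem12:
  shows "weakly_chain_rule_decomposable (dominating :: ('x::finite) cgm)
       \<and> importance_inducing (dominating :: ('x::finite) cgm)"
proof
  show "weakly_chain_rule_decomposable (dominating :: ('x::finite) cgm)"
    unfolding weakly_chain_rule_decomposable_def
  proof (intro allI impI, elim conjE)
    fix f g :: "'x bfun" and x xg
    assume mm: "mono_modular f g" and x: "x \<in> dep g" and xg: "xg \<notin> dep f"
    show "pderiv_game x (dominating f) =
          (\<lambda>S. pderiv_game x (dominating g) S * pderiv_game xg (dominating (mod_subst f g xg)) S)"
      by (rule ext) (simp only: deriv_decomp[OF mm x] deriv_subst[OF mm xg])
  qed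
  show "importance_inducing (dominating :: ('x::finite) cgm)"
    unfolding importance_inducing_def
  proof (intro conjI allI impI)
    fix f :: "'x bfun" and x S
    show "0 \<le> pderiv_game x (dominating f) S" using pderiv_bounds[of x f S] by simp
    show "pderiv_game x (dominating f) S \<le> 1" using pderiv_bounds[of x f S] by simp
  next
    fix f :: "'x bfun" and x
    assume "x \<notin> dep f"
    then show "pderiv_game x (dominating f) = (\<lambda>S. 0)"
      by (intro ext) (simp add: pderiv_game_def dominating_D D_indep)
  next
    fix x :: 'x
    show "pderiv_game x (dominating (bvar x)) = (\<lambda>S. 1)"
      by (intro ext) (simp add: pderiv_game_def dominating_D D_bvar)
    show "pderiv_game x (dominating (\<lambda>u. \<not> bvar x u)) = (\<lambda>S. 1)"
      by (intro ext) (simp add: pderiv_game_def dominating_D D_nbvar)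
  next
    fix \<sigma> :: "'x \<Rightarrow> 'x" and f :: "'x bfun" and S
    assume b: "bij \<sigma>"
    show "dominating f S = dominating (perm_fun \<sigma> f) (\<sigma> ` S)"
      unfolding dominating_D D_perm[OF b, of f S] ..
  next
    fix f :: "'x bfun" and y S
    show "dominating f S = dominating (flipvar f y) S"
      unfolding dominating_D D_flip[of f S y] ..
  next
    fix f g h :: "'x bfun" and x
    assume a: "mono_modular f g \<and> mono_modular h g \<and> mod_cof h g True \<le> mod_cof f g True
      \<and> mod_cof f g False \<le> mod_cof h g False \<and> x \<in> dep g"
    then have mf: "mono_modular f g" and mh: "mono_modular h g" and x: "x \<in> dep g"
      and c1: "mod_cof h g True \<le> mod_cof f g True" and c0: "mod_cof f g False \<le> mod_cof h g False"
      by auto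
    show "pderiv_game x (dominating h) \<le> pderiv_game x (dominating f)"
    proof (rule le_funI)
      fix S
      have i1: "D (mod_cof h g True) S \<Longrightarrow> D (mod_cof f g True) S"
        by (erule D_mono_fun[rotated]) (use c1 in \<open>auto simp: le_fun_def\<close>)
      have i0: "D (mod_cof f g False) S \<Longrightarrow> D (mod_cof h g False) S"
        by (erule D_mono_fun[rotated]) (use c0 in \<open>auto simp: le_fun_def\<close>)
      have p: "0 \<le> pderiv_game x (dominating g) S" using pderiv_bounds[of x g S] by simp
      show "pderiv_game x (dominating h) S \<le> pderiv_game x (dominating f) S"
        unfolding deriv_decomp[OF mf x] deriv_decomp[OF mh x]
        by (rule mult_left_mono[OF _ p]) (use i1 i0 in auto)
    qed
  qed
qed

end
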